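(* There exists a deterministic Guesser (using no randomness at all) with $\log^2 n + \log n$ bits of memory whose expected number of correct guesses, when playing the card guessing game against the random-shuffle Dealer, is at least $\frac12 \log n$.
   Context: Card guessing game: a deck consists of $n$ distinct cards labeled $1,\dots,n$ and the game lasts $n$ turns. In each turn the Dealer selects a card from the cards still in the deck and places it face down; the Guesser then names a card of $[n]$ (her guess); the card is revealed and discarded from the deck. A guess is correct if it equals the drawn card; the score is the number of correct guesses. A Guesser with $m$ bits of memory keeps a memory state in $\{0,1\}^m$ between turns and consists of a guessing function (mapping the memory state to a guess) and a state-transition function (mapping the memory state and the revealed card to a new memory state). The random-shuffle Dealer arranges the deck according to a uniformly random permutation and draws the cards in that order. Logarithms $\log$ are base 2. *)

theory Defs
  imports Complex_Main "HOL-Combinatorics.Multiset_Permutations"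
begin

definition is_guesser ::
  "nat \<Rightarrow> nat \<Rightarrow> (bool list \<Rightarrow> nat) \<Rightarrow> (bool list \<Rightarrow> nat \<Rightarrow> bool list) \<Rightarrow> bool list \<Rightarrow> bool" where
  "is_guesser n m g d s0 \<longleftrightarrow>
     length s0 = m \<and>
     (\<forall>s. length s = m \<longrightarrow> g s \<in> {1..n}) \<and>
     (\<forall>s c. length s = m \<longrightarrow> c \<in> {1..n} \<longrightarrow> length (d s c) = m)"

fun play :: "(bool list \<Rightarrow> nat) \<Rightarrow> (bool list \<Rightarrow> nat \<Rightarrow> bool list) \<Rightarrow> bool list \<Rightarrow> nat list \<Rightarrow> nat" where
  "play g d s [] = 0"
| "play g d s (c # cs) = (if g s = c then 1 else 0) + play g d (d s c) cs"

definition expected_score ::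
  "nat \<Rightarrow> (bool list \<Rightarrow> nat) \<Rightarrow> (bool list \<Rightarrow> nat \<Rightarrow> bool list) \<Rightarrow> bool list \<Rightarrow> real" where
  "expected_score n g d s0 =
     (\<Sum>p\<in>permutations_of_set {1..n}. real (play g d s0 p)) / real (card (permutations_of_set {1..n}))"

end

theory Submission
  imports Defs "HOL-Library.Discrete_Functions"
begin


definition sw :: "'a \<Rightarrow> 'a \<Rightarrow> 'a \<Rightarrow> 'a" where
  "sw u v x = (if x = u then v else if x = v then u else x)"

lemma sw_inv[simp]: "sw u v (sw u v x) = x"
  by (auto simp: sw_def)

lemma sw_inj: "inj (sw u v)"
  by (metis injI sw_inv)

lemma sw_in_iff: "u \<in> U \<Longrightarrow> v \<in> U \<Longrightarrow> (sw u v x \<in> U) = (x \<in> U)"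
  by (auto simp: sw_def)

lemma sw_image: "u \<in> A \<Longrightarrow> v \<in> A \<Longrightarrow> sw u v ` A = A"
  by (auto simp: sw_def image_iff)

definition lastU :: "'a set \<Rightarrow> 'a list \<Rightarrow> 'a" where
  "lastU U p = last (filter (\<lambda>x. x \<in> U) p)"

lemma lastU_map_sw:
  assumes "u \<in> U" "v \<in> U" "filter (\<lambda>x. x \<in> U) p \<noteq> []"
  shows "lastU U (map (sw u v) p) = sw u v (lastU U p)"
proof -
  have "filter (\<lambda>x. x \<in> U) (map (sw u v) p) = map (sw u v) (filter (\<lambda>x. x \<in> U) p)"
    by (simp add: filter_map o_def sw_in_iff assms)
  then show ?thesis using assms(3) by (simp add: lastU_def last_map)
qed

lemma lastU_in:
  assumes "p \<in> permutations_of_set A" "U \<subseteq> A" "U \<noteq> {}"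
  shows "lastU U p \<in> U" "filter (\<lambda>x. x \<in> U) p \<noteq> []"
proof -
  have "set p = A" using assms(1) by (simp add: permutations_of_set_def)
  then show ne: "filter (\<lambda>x. x \<in> U) p \<noteq> []" using assms(2,3) by (auto simp: filter_empty_conv)
  show "lastU U p \<in> U" unfolding lastU_def using last_in_set[OF ne] by auto
qed

lemma card_C_le:
  assumes "finite A" "U \<subseteq> A" "u \<in> U" "v \<in> U"
  shows "card {p \<in> permutations_of_set A. lastU U p = u} \<le> card {p \<in> permutations_of_set A. lastU U p = v}"
proof (rule card_inj_on_le[where f = "map (sw u v)"])
  show "inj_on (map (sw u v)) {p \<in> permutations_of_set A. lastU U p = u}"
    by (meson inj_mapI inj_on_subset subset_UNIV sw_inj)
  show "finite {p \<in> permutations_of_set A. lastU U p = v}" by simp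
  show "map (sw u v) ` {p \<in> permutations_of_set A. lastU U p = u} \<subseteq> {p \<in> permutations_of_set A. lastU U p = v}"
  proof
    fix q assume "q \<in> map (sw u v) ` {p \<in> permutations_of_set A. lastU U p = u}"
    then obtain p where p: "p \<in> permutations_of_set A" "lastU U p = u" and q: "q = map (sw u v) p" by auto
    have "set p = A" "distinct p" using p(1) by (auto simp: permutations_of_set_def)
    moreover have "u \<in> A" "v \<in> A" using assms by auto
    ultimately have 1: "q \<in> permutations_of_set A"
      using sw_image[of u A v] sw_inj[of u v] q
      by (auto simp: permutations_of_set_def distinct_map intro: inj_on_subset[OF sw_inj])
    have "filter (\<lambda>x. x \<in> U) p \<noteq> []" using lastU_in[OF p(1) assms(2)] assms(3) by auto
    then have "lastU U q = v"
      using lastU_map_sw[OF assms(3,4)] p(2) q by (simp add: sw_def)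
    with 1 show "q \<in> {p \<in> permutations_of_set A. lastU U p = v}" by simp
  qed
qed

lemma card_C_eq:
  assumes "finite A" "U \<subseteq> A" "u \<in> U" "v \<in> U"
  shows "card {p \<in> permutations_of_set A. lastU U p = u} = card {p \<in> permutations_of_set A. lastU U p = v}"
  using card_C_le[OF assms] card_C_le[OF assms(1,2,4,3)] by simp

lemma card_lastU_B:
  assumes "finite A" "U \<subseteq> A" "B \<subseteq> U" "U \<noteq> {}"
  shows "card {p \<in> permutations_of_set A. lastU U p \<in> B} * card U = card B * card (permutations_of_set A)"
proof -
  obtain u0 where u0: "u0 \<in> U" using assms(4) by auto
  define c where "c = card {p \<in> permutations_of_set A. lastU U p = u0}"
  have cu: "card {p \<in> permutations_of_set A. lastU U p = u} = c" if "u \<in> U" for u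
    using card_C_eq[OF assms(1,2) that u0] c_def by simp
  have fU: "finite U" using assms(1,2) finite_subset by blast
  have un: "{p \<in> permutations_of_set A. lastU U p \<in> X} = (\<Union>u\<in>X. {p \<in> permutations_of_set A. lastU U p = u})" for X
    by auto
  have cardX: "card {p \<in> permutations_of_set A. lastU U p \<in> X} = card X * c" if "X \<subseteq> U" for X
  proof -
    have fX: "finite X" using fU that finite_subset by blast
    have "card {p \<in> permutations_of_set A. lastU U p \<in> X} = (\<Sum>u\<in>X. card {p \<in> permutations_of_set A. lastU U p = u})"
      unfolding un by (rule card_UN_disjoint) (auto simp: fX)
    also have "\<dots> = (\<Sum>u\<in>X. c)" using that cu by (intro sum.cong) auto
    finally show ?thesis by simp
  qed
  have "{p \<in> permutations_of_set A. lastU U p \<in> U} = permutations_of_set A"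
    using lastU_in[OF _ assms(2,4)] by auto
  then have "card (permutations_of_set A) = card U * c" using cardX[of U] by simp
  then show ?thesis using cardX[OF assms(3)] by simp
qed



definition blk :: "nat \<Rightarrow> nat set" where "blk j = {2^j..<2^Suc j}"

definition sig :: "nat \<Rightarrow> nat set \<Rightarrow> nat \<Rightarrow> nat \<times> nat" where
  "sig L S = (\<lambda>j\<in>{..<L}. (card (blk j \<inter> S), (\<Sum> (blk j \<inter> S)) mod 2^j))"

definition Dn :: "nat \<Rightarrow> (nat \<Rightarrow> nat \<times> nat) \<Rightarrow> nat \<Rightarrow> nat \<Rightarrow> nat \<times> nat" where
  "Dn L v c = (\<lambda>j\<in>{..<L}. if c \<in> blk j then (min (Suc (fst (v j))) (2^j), (snd (v j) + c) mod 2^j) else v j)"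

definition Gn :: "nat \<Rightarrow> (nat \<Rightarrow> nat \<times> nat) \<Rightarrow> nat" where
  "Gn L v = (if \<exists>j<L. fst (v j) < 2^j then
      (let j = (LEAST j. j < L \<and> fst (v j) < 2^j) in
        if Suc (fst (v j)) = 2^j then 2^j + (\<Sum> (blk j) + 2^j - snd (v j)) mod 2^j else 1)
     else 1)"

definition Qs :: "nat \<Rightarrow> (nat \<Rightarrow> nat \<times> nat) set" where
  "Qs L = PiE {..<L} (\<lambda>j. {0..2^j} \<times> {..<(2::nat)^j})"

lemma card_blk[simp]: "card (blk j) = 2^j"
  by (simp add: blk_def)

lemma finite_blk[simp]: "finite (blk j)"
  by (simp add: blk_def)

lemma blk_disj: "i \<noteq> j \<Longrightarrow> blk i \<inter> blk j = {}"
proof -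
  assume "i \<noteq> j"
  then consider "i < j" | "j < i" by linarith
  then show ?thesis
  proof cases
    case 1
    then have "(2::nat)^Suc i \<le> 2^j" by (intro power_increasing) auto
    then show ?thesis by (auto simp: blk_def)
  next
    case 2
    then have "(2::nat)^Suc j \<le> 2^i" by (intro power_increasing) auto
    then show ?thesis by (auto simp: blk_def)
  qed
qed

lemma sig_in_Qs: "sig L S \<in> Qs L"
proof -
  have "card (blk j \<inter> S) \<le> 2^j" for j
    by (metis card_blk card_mono finite_blk inf_le1)
  then show ?thesis by (auto simp: sig_def Qs_def)
qed

lemma Dn_in_Qs: "v \<in> Qs L \<Longrightarrow> Dn L v c \<in> Qs L"
  by (auto simp: Dn_def Qs_def PiE_iff)

lemma sig_insert:
  assumes "c \<notin> S"
  shows "sig L (insert c S) = Dn L (sig L S) c"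
proof (rule ext)
  fix j
  show "sig L (insert c S) j = Dn L (sig L S) c j"
  proof (cases "j < L")
    case False then show ?thesis by (simp add: sig_def Dn_def)
  next
    case True
    show ?thesis
    proof (cases "c \<in> blk j")
      case False
      then have "blk j \<inter> insert c S = blk j \<inter> S" by auto
      then show ?thesis using True False by (simp add: sig_def Dn_def)
    next
      case cin: True
      have e: "blk j \<inter> insert c S = insert c (blk j \<inter> S)" using cin by auto
      have f: "finite (blk j \<inter> S)" by simp
      have "card (insert c (blk j \<inter> S)) \<le> 2^j"
        by (metis card_blk card_mono e finite_blk inf_le1)
      then have "min (Suc (card (blk j \<inter> S))) (2^j) = Suc (card (blk j \<inter> S))"
        using assms f by simp
      moreover have "(\<Sum> (insert c (blk j \<inter> S))) = c + \<Sum> (blk j \<inter> S)"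
        using assms f by simp
      ultimately show ?thesis using True cin e assms f
        by (simp add: sig_def Dn_def mod_add_right_eq add.commute)
    qed
  qed
qed

lemma Gn_range:
  assumes "2^L \<le> n" "n \<ge> 1"
  shows "Gn L v \<in> {1..n}"
proof -
  { assume ex: "\<exists>j<L. fst (v j) < 2^j"
    define j where "j = (LEAST j. j < L \<and> fst (v j) < 2^j)"
    obtain j0 where j0: "j0 < L \<and> fst (v j0) < 2^j0" using ex by blast
    have "j < L \<and> fst (v j) < 2^j" unfolding j_def by (rule LeastI[of _ j0]) (rule j0)
    then have jL: "j < L" by simp
    have "(2::nat)^Suc j \<le> 2^L" using jL by (intro power_increasing) auto
    then have h1: "2 * (2::nat)^j \<le> 2^L" by simp
    have h2: "(\<Sum> (blk j) + 2^j - snd (v j)) mod 2^j < (2::nat)^j" by simp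
    have "2^j + (\<Sum> (blk j) + 2^j - snd (v j)) mod 2^j \<le> n" using h1 h2 assms(1) by linarith
    moreover have "Gn L v = (if Suc (fst (v j)) = 2^j then 2^j + (\<Sum> (blk j) + 2^j - snd (v j)) mod 2^j else 1)"
      using ex unfolding Gn_def j_def Let_def by simp
    ultimately have "Gn L v \<in> {1..n}" using assms(2) by simp }
  then show ?thesis using assms by (auto simp: Gn_def)
qed

lemma arith_core:
  fixes k c T :: nat
  assumes "k > 0" "k \<le> c" "c < 2*k" "c \<le> T"
  shows "k + (T + k - (T - c) mod k) mod k = c"
proof -
  have "T + k - (T - c) mod k = c + k + (T - c) div k * k"
    using assms div_mult_mod_eq[of "T - c" k] mod_less_eq_dividend[of "T-c" k] by linarith
  moreover have "(c + k + (T - c) div k * k) mod k = c mod k"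
    by (metis mod_add_self2 mod_mult_self1)
  ultimately have "(T + k - (T - c) mod k) mod k = c mod k"
    by simp
  moreover have "c mod k = c - k" using assms
    by (simp add: le_mod_geq)
  ultimately show ?thesis using assms by simp
qed

lemma Gn_correct:
  assumes "j < L" "c \<in> blk j" "\<And>i. i < j \<Longrightarrow> blk i \<subseteq> P" "blk j \<inter> P = blk j - {c}"
  shows "Gn L (sig L P) = c"
proof -
  let ?v = "sig L P"
  have full: "fst (?v i) = 2^i" if "i < j" for i
  proof -
    have "blk i \<inter> P = blk i" using assms(3)[OF that] by auto
    then show ?thesis using that assms(1) by (simp add: sig_def)
  qed
  have cj: "fst (?v j) = 2^j - 1"
    using assms by (simp add: sig_def)
  have pos: "(2::nat)^j > 0" by simp
  have ex: "\<exists>j<L. fst (?v j) < 2^j" using assms(1) cj pos by (intro exI[of _ j]) simp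
  have least: "(LEAST i. i < L \<and> fst (?v i) < 2^i) = j"
  proof (rule Least_equality)
    show "j < L \<and> fst (?v j) < 2^j" using assms(1) cj pos by simp
    show "j \<le> y" if "y < L \<and> fst (?v y) < 2^y" for y
      using full[of y] that by (metis leI less_irrefl)
  qed
  have sj: "snd (?v j) = (\<Sum> (blk j) - c) mod 2^j"
    using assms by (simp add: sig_def sum_diff1_nat)
  have cb: "2^j \<le> c" "c < 2 * 2^j" using assms(2) by (auto simp: blk_def)
  have cT: "c \<le> \<Sum> (blk j)" using assms(2) by (intro member_le_sum) auto
  have "Suc (fst (?v j)) = 2^j" using cj pos by simp
  then have "Gn L ?v = 2^j + (\<Sum> (blk j) + 2^j - snd (?v j)) mod 2^j"
    unfolding Gn_def using ex least by (simp add: Let_def)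
  also have "\<dots> = c" unfolding sj by (rule arith_core[OF pos cb cT])
  finally show ?thesis .
qed



definition Uj :: "nat \<Rightarrow> nat set" where "Uj j = {1..<2^Suc j}"

lemma blk_sub_Uj: "i \<le> j \<Longrightarrow> blk i \<subseteq> Uj j"
proof -
  assume "i \<le> j"
  then have "(2::nat)^Suc i \<le> 2^Suc j" by (intro power_increasing) auto
  moreover have "(1::nat) \<le> 2^i" by simp
  ultimately show ?thesis by (auto simp: blk_def Uj_def)
qed

lemma card_Uj: "card (Uj j) = 2 * 2^j - 1"
  by (simp add: Uj_def)

lemma lastU_prefix0:
  assumes "distinct p" "U \<subseteq> set p" "filter (\<lambda>x. x \<in> U) p \<noteq> []" "c = lastU U p"
  shows "U - {c} \<subseteq> set (takeWhile (\<lambda>x. x \<noteq> c) p)"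
    "c \<notin> set (takeWhile (\<lambda>x. x \<noteq> c) p)"
proof -
  have "c \<in> set (filter (\<lambda>x. x \<in> U) p)" unfolding assms(4) lastU_def by (rule last_in_set[OF assms(3)])
  then have cp: "c \<in> set p" by simp
  obtain xs ys where p: "p = xs @ c # ys" and cxs: "c \<notin> set xs"
    using split_list_first[OF cp] by blast
  have tw: "takeWhile (\<lambda>x. x \<noteq> c) p = xs"
    unfolding p using cxs by (subst takeWhile_append2) auto
  have cys: "c \<notin> set ys" using assms(1) p by simp
  have lc: "c = last (filter (\<lambda>x. x \<in> U) (xs @ c # ys))" using assms(4) unfolding lastU_def p .
  have nys: "y \<notin> U" if "y \<in> set ys" for y
  proof
    assume yU: "y \<in> U"
    then have ne: "filter (\<lambda>x. x \<in> U) ys \<noteq> []" using that by (auto simp: filter_empty_conv)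
    have "last (filter (\<lambda>x. x \<in> U) (xs @ c # ys)) = last (filter (\<lambda>x. x \<in> U) ys)"
      using ne by (simp add: last_append)
    then have "c = last (filter (\<lambda>x. x \<in> U) ys)" using lc by simp
    then have "c \<in> set (filter (\<lambda>x. x \<in> U) ys)" using last_in_set[OF ne] by simp
    with cys show False by simp
  qed
  show "U - {c} \<subseteq> set (takeWhile (\<lambda>x. x \<noteq> c) p)"
  proof
    fix u assume u: "u \<in> U - {c}"
    then have "u \<in> set xs \<or> u = c \<or> u \<in> set ys" using assms(2) p by auto
    then show "u \<in> set (takeWhile (\<lambda>x. x \<noteq> c) p)" using u nys unfolding tw by auto
  qed
  show "c \<notin> set (takeWhile (\<lambda>x. x \<noteq> c) p)" unfolding tw by (rule cxs)
qed

lemmas lastU_prefix = lastU_prefix0[OF _ _ _ refl]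

lemma score_ge:
  assumes "p \<in> permutations_of_set {1..n}" "2^L \<le> n"
  shows "card {j \<in> {..<L}. lastU (Uj j) p \<in> blk j}
     \<le> card {c \<in> set p. Gn L (sig L (set (takeWhile (\<lambda>x. x \<noteq> c) p))) = c}"
proof (rule card_inj_on_le[where f = "\<lambda>j. lastU (Uj j) p"])
  show "finite {c \<in> set p. Gn L (sig L (set (takeWhile (\<lambda>x. x \<noteq> c) p))) = c}" by simp
  show "inj_on (\<lambda>j. lastU (Uj j) p) {j \<in> {..<L}. lastU (Uj j) p \<in> blk j}"
    using blk_disj by (auto simp: inj_on_def) (metis IntI empty_iff)
  have sp: "set p = {1..n}" "distinct p" using assms(1) by (auto simp: permutations_of_set_def)
  show "(\<lambda>j. lastU (Uj j) p) ` {j \<in> {..<L}. lastU (Uj j) p \<in> blk j}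
        \<subseteq> {c \<in> set p. Gn L (sig L (set (takeWhile (\<lambda>x. x \<noteq> c) p))) = c}"
  proof (rule image_subsetI)
    fix j assume j: "j \<in> {j \<in> {..<L}. lastU (Uj j) p \<in> blk j}"
    let ?c = "lastU (Uj j) p"
    let ?P = "set (takeWhile (\<lambda>x. x \<noteq> ?c) p)"
    have jL: "j < L" and cb: "?c \<in> blk j" using j by auto
    have "(2::nat)^Suc j \<le> 2^L" using jL by (intro power_increasing) auto
    then have Usub: "Uj j \<subseteq> set p" using assms(2) sp by (auto simp: Uj_def)
    have ne: "filter (\<lambda>x. x \<in> Uj j) p \<noteq> []"
      using blk_sub_Uj[of j j] cb Usub by (auto simp: filter_empty_conv)
    note pre = lastU_prefix[OF sp(2) Usub ne]
    have cp: "?c \<in> set p" using cb blk_sub_Uj[of j j] Usub by auto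
    have "Gn L (sig L ?P) = ?c"
    proof (rule Gn_correct[OF jL cb])
      fix i assume "i < j"
      then have "blk i \<subseteq> Uj j" "?c \<notin> blk i" using blk_sub_Uj[of i j] blk_disj[of i j] cb by auto
      then show "blk i \<subseteq> ?P" using pre(1) by auto
    next
      show "blk j \<inter> ?P = blk j - {?c}" using pre blk_sub_Uj[of j j] by auto
    qed
    then show "?c \<in> {c \<in> set p. Gn L (sig L (set (takeWhile (\<lambda>x. x \<noteq> c) p))) = c}"
      using cp by simp
  qed
qed



lemma card_filter_sum: "finite A \<Longrightarrow> card {x\<in>A. P x} = (\<Sum>x\<in>A. if P x then 1 else 0)"
  by (simp add: sum.If_cases Int_def)

lemma card_sum_swap:
  assumes "finite A" "finite B"
  shows "(\<Sum>x\<in>A. card {y\<in>B. P x y}) = (\<Sum>y\<in>B. card {x\<in>A. P x y})"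
proof -
  have "(\<Sum>x\<in>A. card {y\<in>B. P x y}) = (\<Sum>x\<in>A. \<Sum>y\<in>B. if P x y then 1 else 0)"
    using assms by (simp add: card_filter_sum)
  also have "\<dots> = (\<Sum>y\<in>B. \<Sum>x\<in>A. if P x y then 1 else 0)" by (rule sum.swap)
  also have "\<dots> = (\<Sum>y\<in>B. card {x\<in>A. P x y})"
    using assms by (simp add: card_filter_sum)
  finally show ?thesis .
qed

lemma sum_odd: "(\<Sum>j<L. 2*j+1) = L*(L::nat)"
  by (induction L) auto

lemma card_Qs: "card (Qs L) \<le> 2^(L*L)"
proof -
  have "card (Qs L) = (\<Prod>j<L. card ({0..(2::nat)^j} \<times> {..<(2::nat)^j}))"
    unfolding Qs_def by (rule card_PiE) simp
  also have "\<dots> = (\<Prod>j<L. (2^j + 1) * 2^j)" by (simp add: card_cartesian_product)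
  also have "\<dots> \<le> (\<Prod>j<L. 2^(2*j+1))"
  proof (rule prod_mono)
    fix j
    have "(2::nat)^j + 1 \<le> 2^j * 2" by (simp add: Suc_leI)
    then have "((2::nat)^j + 1) * 2^j \<le> 2^j * 2 * 2^j" by simp
    also have "\<dots> = 2^(j+j+1)" by (simp only: power_add power_one_right)
    also have "j+j+1 = 2*j+1" by simp
    finally show "0 \<le> ((2::nat)^j + 1) * 2^j \<and> ((2::nat)^j + 1) * 2^j \<le> 2^(2*j+1)" by simp
  qed
  also have "\<dots> = 2^(\<Sum>j<L. 2*j+1)" by (simp add: power_sum)
  also have "\<dots> = 2^(L*L)" by (simp only: sum_odd)
  finally show ?thesis .
qed

lemma finite_Qs: "finite (Qs L)"
  unfolding Qs_def by (intro finite_PiE) auto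

lemma card_bool_lists: "card {xs :: bool list. length xs = m} = 2^m"
  using card_lists_length_eq[of "UNIV :: bool set" m] by simp

lemma finite_bool_lists: "finite {xs :: bool list. length xs = m}"
  using finite_lists_length_eq[of "UNIV :: bool set" m] by simp

lemma play_eq:
  assumes f: "inj_on f (Qs L)"
    and g: "\<And>q. q \<in> Qs L \<Longrightarrow> g (f q) = Gn L q"
    and d: "\<And>q c. q \<in> Qs L \<Longrightarrow> d (f q) c = f (Dn L q c)"
  shows "distinct p \<Longrightarrow> set p \<inter> S = {} \<Longrightarrow>
    play g d (f (sig L S)) p = card {c \<in> set p. Gn L (sig L (S \<union> set (takeWhile (\<lambda>x. x \<noteq> c) p))) = c}"
proof (induction p arbitrary: S)
  case Nil
  then show ?case by simp
next
  case (Cons a p)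
  have aS: "a \<notin> S" and ap: "a \<notin> set p" and dp: "distinct p" and pS: "set p \<inter> insert a S = {}"
    using Cons.prems by auto
  have IH: "play g d (f (sig L (insert a S))) p =
      card {c \<in> set p. Gn L (sig L (insert a S \<union> set (takeWhile (\<lambda>x. x \<noteq> c) p))) = c}"
    using Cons.IH[OF dp pS] .
  have g1: "g (f (sig L S)) = Gn L (sig L S)" using g sig_in_Qs by blast
  have d1: "d (f (sig L S)) a = f (sig L (insert a S))" using d sig_in_Qs sig_insert[OF aS] by metis
  define A' where "A' = {c \<in> set p. Gn L (sig L (insert a S \<union> set (takeWhile (\<lambda>x. x \<noteq> c) p))) = c}"
  have eq: "{c \<in> set (a#p). Gn L (sig L (S \<union> set (takeWhile (\<lambda>x. x \<noteq> c) (a#p)))) = c}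
      = (if Gn L (sig L S) = a then insert a A' else A')"
  proof (rule set_eqI)
    fix c
    show "c \<in> {c \<in> set (a#p). Gn L (sig L (S \<union> set (takeWhile (\<lambda>x. x \<noteq> c) (a#p)))) = c} \<longleftrightarrow>
          c \<in> (if Gn L (sig L S) = a then insert a A' else A')"
    proof (cases "c = a")
      case True
      then show ?thesis using ap by (simp add: A'_def)
    next
      case False
      show ?thesis
      proof (cases "c \<in> set p")
        case True
        have eq2: "S \<union> set (takeWhile (\<lambda>x. x \<noteq> c) (a#p)) = insert a S \<union> set (takeWhile (\<lambda>x. x \<noteq> c) p)"
          using False by auto
        have "c \<in> {c \<in> set (a#p). Gn L (sig L (S \<union> set (takeWhile (\<lambda>x. x \<noteq> c) (a#p)))) = c}
            \<longleftrightarrow> Gn L (sig L (S \<union> set (takeWhile (\<lambda>x. x \<noteq> c) (a#p)))) = c"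
          using True by (simp only: mem_Collect_eq list.set_intros(2) simp_thms)
        also have "\<dots> \<longleftrightarrow> Gn L (sig L (insert a S \<union> set (takeWhile (\<lambda>x. x \<noteq> c) p))) = c"
          by (simp only: eq2)
        also have "\<dots> \<longleftrightarrow> c \<in> A'" unfolding A'_def using True by (simp only: mem_Collect_eq simp_thms)
        also have "\<dots> \<longleftrightarrow> c \<in> (if Gn L (sig L S) = a then insert a A' else A')" using False by simp
        finally show ?thesis .
      next
        case cp: False
        then show ?thesis using False by (simp add: A'_def)
      qed
    qed
  qed
  have fA: "finite A'" and aA: "a \<notin> A'" using ap by (auto simp: A'_def)
  have IH': "play g d (f (sig L (insert a S))) p = card A'" using IH unfolding A'_def .
  have "play g d (f (sig L S)) (a#p) = (if Gn L (sig L S) = a then 1 else 0) + card A'"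
    using IH' g1 d1 by simp
  then show ?case unfolding eq using fA aA by simp
qed



theorem mainTheorem1:
  fixes n :: nat
  assumes "n \<ge> 1"
  shows "\<exists>m g d s0. real m \<le> (log 2 n)\<^sup>2 + log 2 n \<and> is_guesser n m g d s0 \<and>
           expected_score n g d s0 \<ge> (1/2) * log 2 n"
proof -
  define L where "L = floor_log n"
  have n0: "n > 0" using assms by simp
  have L1: "2^L \<le> n" using floor_log_exp2_le[OF n0] L_def by simp
  have L2: "n < 2 * 2^L" using floor_log_exp2_gt[of n] L_def by simp
  define m where "m = L*L"
  have "card (Qs L) \<le> card {xs::bool list. length xs = m}" unfolding card_bool_lists m_def by (rule card_Qs)
  from card_le_inj[OF finite_Qs[of L] finite_bool_lists[of m] this]
  obtain f where fQ: "f ` Qs L \<subseteq> {xs::bool list. length xs = m}" and inj: "inj_on f (Qs L)" by blast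
  define g where "g s = (if s \<in> f ` Qs L then Gn L (inv_into (Qs L) f s) else 1)" for s
  define d where "d s c = (if s \<in> f ` Qs L then f (Dn L (inv_into (Qs L) f s) c) else s)" for s c
  define s0 where "s0 = f (sig L {})"
  have gq: "g (f q) = Gn L q" if "q \<in> Qs L" for q using that inj by (simp add: g_def)
  have dq: "d (f q) c = f (Dn L q c)" if "q \<in> Qs L" for q c using that inj by (simp add: d_def)
  have guess: "is_guesser n m g d s0"
    unfolding is_guesser_def
  proof (intro conjI allI impI)
    show "length s0 = m" using fQ sig_in_Qs s0_def by auto
    show "g s \<in> {1..n}" for s using Gn_range[OF L1 assms] assms by (simp add: g_def)
    fix s :: "bool list" and c :: nat
    assume "length s = m"
    show "length (d s c) = m"
    proof (cases "s \<in> f ` Qs L")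
      case True
      then have "Dn L (inv_into (Qs L) f s) c \<in> Qs L" by (intro Dn_in_Qs inv_into_into)
      then have "f (Dn L (inv_into (Qs L) f s) c) \<in> {xs::bool list. length xs = m}" using fQ by blast
      then show ?thesis using True by (simp add: d_def)
    next
      case False
      then show ?thesis using \<open>length s = m\<close> by (simp add: d_def)
    qed
  qed
  have mb: "real m \<le> (log 2 n)\<^sup>2 + log 2 n"
  proof -
    have a: "real L \<le> log 2 n" using le_log2_of_power[OF L1] by simp
    have b: "0 \<le> log 2 n" using assms by simp
    have "real m = real L * real L" by (simp add: m_def)
    also have "\<dots> \<le> log 2 n * log 2 n" using a by (intro mult_mono) auto
    finally show ?thesis using b by (simp add: power2_eq_square)
  qed
  let ?P = "permutations_of_set {1..n}"
  define c where "c j = card {p \<in> ?P. lastU (Uj j) p \<in> blk j}" for j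
  have play_p: "card {j \<in> {..<L}. lastU (Uj j) p \<in> blk j} \<le> play g d s0 p" if p: "p \<in> ?P" for p
  proof -
    have "distinct p" using p by (simp add: permutations_of_set_def)
    then have "play g d s0 p = card {c \<in> set p. Gn L (sig L ({} \<union> set (takeWhile (\<lambda>x. x \<noteq> c) p))) = c}"
      unfolding s0_def by (intro play_eq[OF inj gq dq]) auto
    then show ?thesis using score_ge[OF p L1] by simp
  qed
  have cj: "c j * (2 * 2^j - 1) = 2^j * card ?P" if "j < L" for j
  proof -
    have "(2::nat)^Suc j \<le> 2^L" using that by (intro power_increasing) auto
    then have "Uj j \<subseteq> {1..n}" using L1 by (auto simp: Uj_def)
    moreover have "Uj j \<noteq> {}"
    proof -
      have "(1::nat) < 2 * 2^j" using one_le_power[of "2::nat" j] by linarith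
      then have "1 \<in> Uj j" by (simp add: Uj_def)
      then show ?thesis by blast
    qed
    ultimately show ?thesis using card_lastU_B[of "{1..n}" "Uj j" "blk j"] blk_sub_Uj[of j j] card_Uj[of j]
      unfolding c_def by simp
  qed
  have chalf: "card ?P \<le> 2 * c j" if "j < L" for j
  proof -
    have k: "(0::nat) < 2 * 2^j - 1" using one_le_power[of "2::nat" j] by linarith
    have "card ?P * (2 * 2^j - 1) \<le> 2 * 2^j * card ?P" by simp
    also have "\<dots> = 2 * c j * (2 * 2^j - 1)" using cj[OF that] by simp
    finally show ?thesis using k by simp
  qed
  have sumeq: "(\<Sum>p\<in>?P. card {j \<in> {..<L}. lastU (Uj j) p \<in> blk j}) = (\<Sum>j<L. c j)"
    unfolding c_def by (rule card_sum_swap) auto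
  have tot: "(\<Sum>j<L. c j) \<le> (\<Sum>p\<in>?P. play g d s0 p)"
    unfolding sumeq[symmetric] by (rule sum_mono) (rule play_p)
  have Ppos: "card ?P > 0" by simp
  have E: "expected_score n g d s0 = real (\<Sum>p\<in>?P. play g d s0 p) / real (card ?P)"
    unfolding expected_score_def by simp
  have "(1/2) * log 2 n \<le> expected_score n g d s0"
  proof (cases L)
    case 0
    then have "n = 1" using L2 assms by simp
    then show ?thesis using E by simp
  next
    case (Suc k)
    have c0: "c 0 = card ?P" using cj[of 0] Suc by simp
    have "2 * (\<Sum>j<L. c j) = 2 * c 0 + (\<Sum>j<k. 2 * c (Suc j))"
      unfolding Suc sum.lessThan_Suc_shift by (simp add: sum_distrib_left distrib_left)
    also have "\<dots> \<ge> 2 * card ?P + (\<Sum>j<k. card ?P)"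
      using chalf Suc c0 by (intro add_mono sum_mono) auto
    finally have "(L + 1) * card ?P \<le> 2 * (\<Sum>j<L. c j)" using Suc by (simp add: algebra_simps)
    then have "(L + 1) * card ?P \<le> 2 * (\<Sum>p\<in>?P. play g d s0 p)" using tot by linarith
    then have "real (L + 1) * real (card ?P) \<le> 2 * real (\<Sum>p\<in>?P. play g d s0 p)"
      by (metis of_nat_le_iff of_nat_mult of_nat_numeral)
    then have "real (L + 1) / 2 \<le> expected_score n g d s0"
      unfolding E using Ppos by (simp add: field_simps)
    moreover have "log 2 n < real (L + 1)"
      using log2_of_power_less[of n "L+1"] L2 n0 by simp
    ultimately show ?thesis by simp
  qed
  then show ?thesis using mb guess by blast
qed

end
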